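(* Let $G$ be a graph with vertex set $V$ and let $\mu$ be any probability distribution over subsets of $V$. Let $H_\mu$ be the graph on $V$ with edge weights $H_\mu(u,v)=\Pr_{S\sim\mu}[u,v\in S]$. Then $$\mathsf{inter}_G(H_\mu)\ge\mathbb E_{S\sim\mu,\,S'\sim\mu}\left[\mathsf{inter}_G(K_{|S\cap S'|})\right],$$ where $S,S'$ are independent and $K_m$ denotes the unit-weighted complete graph on $m$ vertices.
   Context: $\mathcal P_{uv}$ is the set of paths in $G$ between $u,v$. A flow is $F:\bigcup\mathcal P_{uv}\to[0,\infty)$ with $F[u,v]=\sum_{p\in\mathcal P_{uv}}F(p)$. $\mathsf{inter}(F)=\sum_{(u,v,u',v'):|\{u,v,u',v'\}|=4}\sum_{p\in\mathcal P_{uv},p'\in\mathcal P_{u'v'}}\sum_{x\in p\cap p'}F(p)F(p')$. For a graph $H$ with edge weights $w$, an $H$-flow in $G$ is a flow $F$ with an injective $\phi:V(H)\to V$ such that $F[\phi(u),\phi(v)]\ge w(u,v)$ for every edge $\{u,v\}$ of $H$; unit-weighted means all weights are $1$. $\mathsf{inter}_G(H)$ is the minimum of $\mathsf{inter}(F)$ over $H$-flows $F$ in $G$. *)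

theory Defs
  imports "HOL-Probability.Probability"
begin

definition graph :: "'a set \<Rightarrow> ('a \<Rightarrow> 'a \<Rightarrow> bool) \<Rightarrow> bool" where
  "graph V E \<longleftrightarrow> finite V \<and> (\<forall>x y. E x y \<longrightarrow> E y x) \<and> (\<forall>x. \<not> E x x)"

definition is_path :: "'a set \<Rightarrow> ('a \<Rightarrow> 'a \<Rightarrow> bool) \<Rightarrow> 'a list \<Rightarrow> 'a \<Rightarrow> 'a \<Rightarrow> bool" where
  "is_path V E p u v \<longleftrightarrow> p \<noteq> [] \<and> distinct p \<and> set p \<subseteq> V \<and> hd p = u \<and> last p = v \<and>
     (\<forall>i. Suc i < length p \<longrightarrow> E (p ! i) (p ! Suc i))"

definition paths :: "'a set \<Rightarrow> ('a \<Rightarrow> 'a \<Rightarrow> bool) \<Rightarrow> 'a \<Rightarrow> 'a \<Rightarrow> 'a list set" where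
  "paths V E u v = {p. is_path V E p u v}"

text \<open>A flow assigns a nonnegative weight to every path. Paths are undirected objects,
  so a path and its reversal (the same path, read from the other end) get the same value.\<close>
definition is_flow :: "('a list \<Rightarrow> real) \<Rightarrow> bool" where
  "is_flow F \<longleftrightarrow> (\<forall>p. 0 \<le> F p) \<and> (\<forall>p. F (rev p) = F p)"

definition flow_val :: "'a set \<Rightarrow> ('a \<Rightarrow> 'a \<Rightarrow> bool) \<Rightarrow> ('a list \<Rightarrow> real) \<Rightarrow> 'a \<Rightarrow> 'a \<Rightarrow> real" where
  "flow_val V E F u v = (\<Sum>p\<in>paths V E u v. F p)"

definition inter :: "'a set \<Rightarrow> ('a \<Rightarrow> 'a \<Rightarrow> bool) \<Rightarrow> ('a list \<Rightarrow> real) \<Rightarrow> real" where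
  "inter V E F =
     (\<Sum>(u, v, u', v') \<in> {(u, v, u', v'). u \<in> V \<and> v \<in> V \<and> u' \<in> V \<and> v' \<in> V \<and> card {u, v, u', v'} = 4}.
        \<Sum>p\<in>paths V E u v. \<Sum>p'\<in>paths V E u' v'.
          real (card (set p \<inter> set p')) * F p * F p')"

text \<open>An H-flow in G, for a weighted graph H on vertex set W with weights w
  (edges of H = pairs of distinct vertices; a weight 0 imposes no constraint).\<close>
definition H_flow :: "'a set \<Rightarrow> ('a \<Rightarrow> 'a \<Rightarrow> bool) \<Rightarrow> 'b set \<Rightarrow> ('b \<Rightarrow> 'b \<Rightarrow> real)
    \<Rightarrow> ('a list \<Rightarrow> real) \<Rightarrow> ('b \<Rightarrow> 'a) \<Rightarrow> bool" where
  "H_flow V E W w F \<phi> \<longleftrightarrow> is_flow F \<and> inj_on \<phi> W \<and> \<phi> ` W \<subseteq> V \<and>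
     (\<forall>a\<in>W. \<forall>b\<in>W. a \<noteq> b \<longrightarrow> w a b \<le> flow_val V E F (\<phi> a) (\<phi> b))"

text \<open>inter_G(H): the minimum (infimum; +\<infinity> if no H-flow exists) of inter(F) over H-flows.\<close>
definition inter_G :: "'a set \<Rightarrow> ('a \<Rightarrow> 'a \<Rightarrow> bool) \<Rightarrow> 'b set \<Rightarrow> ('b \<Rightarrow> 'b \<Rightarrow> real) \<Rightarrow> ereal" where
  "inter_G V E W w = Inf {ereal (inter V E F) | F \<phi>. H_flow V E W w F \<phi>}"

definition K_vertices :: "nat \<Rightarrow> nat set" where "K_vertices m = {..<m}"
definition K_weight :: "nat \<Rightarrow> nat \<Rightarrow> real" where "K_weight a b = 1"

end

theory Submission
  imports Defs
begin

definition Pp :: "'a set pmf \<Rightarrow> 'a \<Rightarrow> 'a \<Rightarrow> real" where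
  "Pp \<mu> a b = measure_pmf.prob \<mu> {S. a \<in> S \<and> b \<in> S}"

definition cc :: "'a set pmf \<Rightarrow> 'a set \<Rightarrow> ('a \<Rightarrow> 'a) \<Rightarrow> 'a set \<Rightarrow> 'a \<Rightarrow> 'a \<Rightarrow> real" where
  "cc \<mu> V \<psi> T x y = (if x \<in> V \<and> y \<in> V \<and> \<psi> x \<in> T \<and> \<psi> y \<in> T \<and> 0 < Pp \<mu> (\<psi> x) (\<psi> y)
      then 1 / Pp \<mu> (\<psi> x) (\<psi> y) else 0)"

lemma cc_nonneg: "0 \<le> cc \<mu> V \<psi> T x y"
  by (simp add: cc_def)

lemma Pp_sym: "Pp \<mu> a b = Pp \<mu> b a"
  unfolding Pp_def by (metis (mono_tags, lifting) Collect_cong)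

lemma cc_sym: "cc \<mu> V \<psi> T x y = cc \<mu> V \<psi> T y x"
  unfolding cc_def using Pp_sym[of \<mu> "\<psi> x" "\<psi> y"] by auto

lemma prob_sum:
  assumes "set_pmf \<mu> \<subseteq> Pow V" "finite V"
  shows "measure_pmf.prob \<mu> {S. Q \<subseteq> S} = (\<Sum>S\<in>Pow V. pmf \<mu> S * (if Q \<subseteq> S then 1 else 0))"
proof -
  have "{S. Q \<subseteq> S} \<inter> set_pmf \<mu> = {S\<in>Pow V. Q \<subseteq> S} \<inter> set_pmf \<mu>" using assms by auto
  then have "measure_pmf.prob \<mu> {S. Q \<subseteq> S} = measure_pmf.prob \<mu> {S\<in>Pow V. Q \<subseteq> S}"
    by (metis measure_Int_set_pmf)
  also have "\<dots> = sum (pmf \<mu>) {S\<in>Pow V. Q \<subseteq> S}"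
    using assms by (simp add: measure_measure_pmf_finite)
  also have "\<dots> = (\<Sum>S\<in>Pow V. pmf \<mu> S * (if Q \<subseteq> S then 1 else 0))"
    using assms by (simp add: sum.inter_filter[symmetric] if_distrib cong: if_cong)
  finally show ?thesis .
qed

lemma D_le_1:
  assumes "set_pmf \<mu> \<subseteq> Pow V" "finite V"
  shows "(\<Sum>S\<in>Pow V. \<Sum>S'\<in>Pow V. pmf \<mu> S * pmf \<mu> S' *
            (cc \<mu> V \<psi> (S \<inter> S') x y * cc \<mu> V \<psi> (S \<inter> S') x' y')) \<le> 1"
proof (cases "x \<in> V \<and> y \<in> V \<and> 0 < Pp \<mu> (\<psi> x) (\<psi> y) \<and> x' \<in> V \<and> y' \<in> V \<and> 0 < Pp \<mu> (\<psi> x') (\<psi> y')")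
  case False
  then have z: "\<And>T. cc \<mu> V \<psi> T x y * cc \<mu> V \<psi> T x' y' = 0" by (auto simp: cc_def)
  show ?thesis unfolding z by simp
next
  case True
  define P1 where "P1 = Pp \<mu> (\<psi> x) (\<psi> y)"
  define P2 where "P2 = Pp \<mu> (\<psi> x') (\<psi> y')"
  define Q where "Q = {\<psi> x, \<psi> y, \<psi> x', \<psi> y'}"
  define R where "R = measure_pmf.prob \<mu> {S. Q \<subseteq> S}"
  have P: "0 < P1" "0 < P2" using True by (auto simp: P1_def P2_def)
  have eq: "\<And>T. cc \<mu> V \<psi> T x y * cc \<mu> V \<psi> T x' y' = (if Q \<subseteq> T then 1 / (P1 * P2) else 0)"
    using True by (auto simp: cc_def Q_def P1_def P2_def)
  have "(\<Sum>S\<in>Pow V. \<Sum>S'\<in>Pow V. pmf \<mu> S * pmf \<mu> S' *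
            (cc \<mu> V \<psi> (S \<inter> S') x y * cc \<mu> V \<psi> (S \<inter> S') x' y'))
      = (\<Sum>S\<in>Pow V. \<Sum>S'\<in>Pow V. (1 / (P1 * P2)) * ((pmf \<mu> S * (if Q \<subseteq> S then 1 else 0)) *
            (pmf \<mu> S' * (if Q \<subseteq> S' then 1 else 0))))"
    unfolding eq by (intro sum.cong refl) auto
  also have "\<dots> = (1 / (P1 * P2)) * (R * R)"
    unfolding R_def prob_sum[OF assms]
    by (simp add: sum_distrib_left sum_distrib_right mult_ac)
  also have "\<dots> \<le> 1"
  proof -
    have R0: "0 \<le> R" by (simp add: R_def)
    have "R \<le> P1" unfolding R_def P1_def Pp_def
      by (rule measure_pmf.finite_measure_mono) (auto simp: Q_def)
    moreover have "R \<le> P2" unfolding R_def P2_def Pp_def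
      by (rule measure_pmf.finite_measure_mono) (auto simp: Q_def)
    ultimately have "R * R \<le> P1 * P2" using R0 P by (intro mult_mono) auto
    then show ?thesis using P by (simp add: field_simps)
  qed
  finally show ?thesis .
qed

lemma inter_expand:
  "inter V E (\<lambda>p. F p * h (hd p) (last p)) =
   (\<Sum>(u, v, u', v') \<in> {(u, v, u', v'). u \<in> V \<and> v \<in> V \<and> u' \<in> V \<and> v' \<in> V \<and> card {u, v, u', v'} = 4}.
        \<Sum>p\<in>paths V E u v. \<Sum>p'\<in>paths V E u' v'.
          real (card (set p \<inter> set p')) * F p * F p' * (h u v * h u' v'))"
  unfolding inter_def
  by (intro sum.cong refl) (auto simp: paths_def is_path_def mult_ac)

lemma swap2:
  fixes a :: "'x \<Rightarrow> 'y \<Rightarrow> real"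
  shows "(\<Sum>x\<in>A. \<Sum>y\<in>B. a x y * (\<Sum>t\<in>C. g x y t)) = (\<Sum>t\<in>C. \<Sum>x\<in>A. \<Sum>y\<in>B. a x y * g x y t)"
proof -
  have "(\<Sum>x\<in>A. \<Sum>y\<in>B. a x y * (\<Sum>t\<in>C. g x y t)) = (\<Sum>x\<in>A. \<Sum>y\<in>B. \<Sum>t\<in>C. a x y * g x y t)"
    by (simp add: sum_distrib_left)
  also have "\<dots> = (\<Sum>x\<in>A. \<Sum>t\<in>C. \<Sum>y\<in>B. a x y * g x y t)"
    by (intro sum.cong refl sum.swap)
  also have "\<dots> = (\<Sum>t\<in>C. \<Sum>x\<in>A. \<Sum>y\<in>B. a x y * g x y t)"
    by (rule sum.swap)
  finally show ?thesis .
qed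

lemma swap4:
  fixes a :: "'x \<Rightarrow> 'y \<Rightarrow> real"
  shows "(\<Sum>x\<in>A. \<Sum>y\<in>B. a x y * (\<Sum>p\<in>P. \<Sum>q\<in>Q. f p q * g x y))
       = (\<Sum>p\<in>P. \<Sum>q\<in>Q. f p q * (\<Sum>x\<in>A. \<Sum>y\<in>B. a x y * g x y))"
proof -
  have "(\<Sum>x\<in>A. \<Sum>y\<in>B. a x y * (\<Sum>p\<in>P. \<Sum>q\<in>Q. f p q * g x y))
      = (\<Sum>p\<in>P. \<Sum>x\<in>A. \<Sum>y\<in>B. a x y * (\<Sum>q\<in>Q. f p q * g x y))"
    by (rule swap2)
  also have "\<dots> = (\<Sum>p\<in>P. \<Sum>q\<in>Q. \<Sum>x\<in>A. \<Sum>y\<in>B. a x y * (f p q * g x y))"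
    by (intro sum.cong refl swap2)
  also have "\<dots> = (\<Sum>p\<in>P. \<Sum>q\<in>Q. f p q * (\<Sum>x\<in>A. \<Sum>y\<in>B. a x y * g x y))"
    by (simp add: sum_distrib_left mult_ac)
  finally show ?thesis .
qed

lemma stepB:
  assumes "set_pmf \<mu> \<subseteq> Pow V" "finite V" "\<And>p. 0 \<le> F p"
  shows "(\<Sum>S\<in>Pow V. \<Sum>S'\<in>Pow V. pmf \<mu> S * pmf \<mu> S' *
           inter V E (\<lambda>p. F p * cc \<mu> V \<psi> (S \<inter> S') (hd p) (last p))) \<le> inter V E F"
proof -
  let ?Tup = "{(u, v, u', v'). u \<in> V \<and> v \<in> V \<and> u' \<in> V \<and> v' \<in> V \<and> card {u, v, u', v'} = 4}"
  have "(\<Sum>S\<in>Pow V. \<Sum>S'\<in>Pow V. pmf \<mu> S * pmf \<mu> S' *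
           inter V E (\<lambda>p. F p * cc \<mu> V \<psi> (S \<inter> S') (hd p) (last p)))
     = (\<Sum>t\<in>?Tup. \<Sum>S\<in>Pow V. \<Sum>S'\<in>Pow V. pmf \<mu> S * pmf \<mu> S' *
          (case t of (u, v, u', v') \<Rightarrow> \<Sum>p\<in>paths V E u v. \<Sum>p'\<in>paths V E u' v'.
          real (card (set p \<inter> set p')) * F p * F p' * (cc \<mu> V \<psi> (S \<inter> S') u v * cc \<mu> V \<psi> (S \<inter> S') u' v')))"
    unfolding inter_expand by (rule swap2)
  also have "\<dots> = (\<Sum>t\<in>?Tup. case t of (u, v, u', v') \<Rightarrow> \<Sum>p\<in>paths V E u v. \<Sum>p'\<in>paths V E u' v'.
          (real (card (set p \<inter> set p')) * F p * F p') * (\<Sum>S\<in>Pow V. \<Sum>S'\<in>Pow V. pmf \<mu> S * pmf \<mu> S' *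
            (cc \<mu> V \<psi> (S \<inter> S') u v * cc \<mu> V \<psi> (S \<inter> S') u' v')))"
    by (intro sum.cong refl) (auto simp: swap4)
  also have "\<dots> \<le> (\<Sum>t\<in>?Tup. case t of (u, v, u', v') \<Rightarrow> \<Sum>p\<in>paths V E u v. \<Sum>p'\<in>paths V E u' v'.
          (real (card (set p \<inter> set p')) * F p * F p') * 1)"
    apply (intro sum_mono)
    apply clarify
    apply (intro sum_mono mult_left_mono D_le_1[OF assms(1,2)])
    using assms(3) by simp
  also have "\<dots> = inter V E F" unfolding inter_def by simp
  finally show ?thesis .
qed

theorem lemma3p7:
  fixes V :: "'a set" and E :: "'a \<Rightarrow> 'a \<Rightarrow> bool" and \<mu> :: "'a set pmf"
  assumes "graph V E"
    and "set_pmf \<mu> \<subseteq> Pow V"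
  shows "inter_G V E V (\<lambda>u v. measure_pmf.prob \<mu> {S. u \<in> S \<and> v \<in> S})
         \<ge> (\<Sum>S\<in>Pow V. \<Sum>S'\<in>Pow V.
               ereal (pmf \<mu> S * pmf \<mu> S') * inter_G V E (K_vertices (card (S \<inter> S'))) K_weight)"
proof -
  have finV: "finite V" using assms(1) by (simp add: graph_def)
  let ?w = "\<lambda>u v. measure_pmf.prob \<mu> {S. u \<in> S \<and> v \<in> S}"
  have e1: "inter_G V E V ?w = Inf {ereal (inter V E F) | F \<phi>. H_flow V E V ?w F \<phi>}"
    by (simp add: inter_G_def)
  have e2: "(\<Sum>S\<in>Pow V. \<Sum>S'\<in>Pow V.
               ereal (pmf \<mu> S * pmf \<mu> S') * inter_G V E (K_vertices (card (S \<inter> S'))) K_weight)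
          \<le> Inf {ereal (inter V E F) | F \<phi>. H_flow V E V ?w F \<phi>}"
  proof (rule Inf_greatest, clarify)
    fix F \<phi> assume Hf: "H_flow V E V ?w F \<phi>"
    have flow: "is_flow F" and inj: "inj_on \<phi> V" and img: "\<phi> ` V \<subseteq> V"
      and fv: "\<And>a b. a \<in> V \<Longrightarrow> b \<in> V \<Longrightarrow> a \<noteq> b \<Longrightarrow> ?w a b \<le> flow_val V E F (\<phi> a) (\<phi> b)"
      using Hf by (auto simp: H_flow_def)
    have F0: "\<And>p. 0 \<le> F p" and Frev: "\<And>p. F (rev p) = F p" using flow by (auto simp: is_flow_def)
    define \<psi> where "\<psi> = inv_into V \<phi>"
    have \<psi>\<phi>: "\<And>a. a \<in> V \<Longrightarrow> \<psi> (\<phi> a) = a" unfolding \<psi>_def using inj by (simp add: inv_into_f_f)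
    define G where "G T p = F p * cc \<mu> V \<psi> T (hd p) (last p)" for T p
    have G_eq: "G T = (\<lambda>p. F p * cc \<mu> V \<psi> T (hd p) (last p))" for T by (simp add: G_def fun_eq_iff)
    have stepA: "ereal (pmf \<mu> S * pmf \<mu> S') * inter_G V E (K_vertices (card (S \<inter> S'))) K_weight
        \<le> ereal (pmf \<mu> S * pmf \<mu> S' * inter V E (G (S \<inter> S')))" if SS: "S \<in> Pow V" "S' \<in> Pow V" for S S'
    proof (cases "pmf \<mu> S * pmf \<mu> S' = 0")
      case True show ?thesis unfolding True by (simp add: zero_ereal_def[symmetric])
    next
      case False
      then have pos: "0 < pmf \<mu> S" using pmf_nonneg[of \<mu> S] by (cases "pmf \<mu> S = 0") auto
      define T where "T = S \<inter> S'"
      have TV: "T \<subseteq> V" using SS by (auto simp: T_def)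
      have finT: "finite T" using TV finV finite_subset by blast
      obtain \<beta> where \<beta>: "bij_betw \<beta> {0..<card T} T" using ex_bij_betw_nat_finite[OF finT] by blast
      have Kv: "K_vertices (card T) = {0..<card T}" by (auto simp: K_vertices_def)
      have HK: "H_flow V E (K_vertices (card T)) K_weight (G T) (\<phi> \<circ> \<beta>)"
        unfolding H_flow_def
      proof (intro conjI ballI impI)
        show "is_flow (G T)" unfolding is_flow_def G_def
        proof (intro conjI allI)
          fix p show "0 \<le> F p * cc \<mu> V \<psi> T (hd p) (last p)" using F0 cc_nonneg by (intro mult_nonneg_nonneg)
          show "F (rev p) * cc \<mu> V \<psi> T (hd (rev p)) (last (rev p)) = F p * cc \<mu> V \<psi> T (hd p) (last p)"
            by (cases "p = []") (auto simp: Frev hd_rev last_rev cc_sym)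
        qed
        show "inj_on (\<phi> \<circ> \<beta>) (K_vertices (card T))" unfolding Kv
          using comp_inj_on[of \<beta> "{0..<card T}" \<phi>] \<beta> inj_on_subset[OF inj TV] by (simp add: bij_betw_def)
        show "(\<phi> \<circ> \<beta>) ` K_vertices (card T) \<subseteq> V" unfolding Kv
        proof -
          have "(\<phi> \<circ> \<beta>) ` {0..<card T} = \<phi> ` T" using \<beta> by (metis bij_betw_def image_comp)
          then show "(\<phi> \<circ> \<beta>) ` {0..<card T} \<subseteq> V" using img TV by blast
        qed
        fix i j assume ij: "i \<in> K_vertices (card T)" "j \<in> K_vertices (card T)" "i \<noteq> j"
        define a where "a = \<beta> i"
        define b where "b = \<beta> j"
        have ij': "i \<in> {0..<card T}" "j \<in> {0..<card T}" using ij(1,2) unfolding Kv .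
        have ab: "a \<in> T" "b \<in> T" unfolding a_def b_def using bij_betw_apply[OF \<beta>] ij' by blast+
        have "a \<noteq> b" unfolding a_def b_def using bij_betw_imp_inj_on[OF \<beta>] ij' ij(3) inj_on_contraD by metis
        note ab = ab this
        have abV: "a \<in> V" "b \<in> V" "\<phi> a \<in> V" "\<phi> b \<in> V" using ab TV img by auto
        have "pmf \<mu> S \<le> Pp \<mu> a b" unfolding Pp_def measure_pmf_single[symmetric]
          by (rule measure_pmf.finite_measure_mono) (use ab in \<open>auto simp: T_def\<close>)
        then have Ppos: "0 < Pp \<mu> a b" using pos by linarith
        have ccv: "cc \<mu> V \<psi> T (\<phi> a) (\<phi> b) = 1 / Pp \<mu> a b"
          using abV ab Ppos by (simp add: cc_def \<psi>\<phi>)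
        have "flow_val V E (G T) (\<phi> a) (\<phi> b) = (\<Sum>p\<in>paths V E (\<phi> a) (\<phi> b). F p * (1 / Pp \<mu> a b))"
          unfolding flow_val_def G_def
          by (intro sum.cong refl) (auto simp: paths_def is_path_def ccv)
        also have "\<dots> = flow_val V E F (\<phi> a) (\<phi> b) / Pp \<mu> a b"
          by (simp add: flow_val_def sum_divide_distrib)
        finally have fvG: "flow_val V E (G T) (\<phi> a) (\<phi> b) = flow_val V E F (\<phi> a) (\<phi> b) / Pp \<mu> a b" .
        have "Pp \<mu> a b \<le> flow_val V E F (\<phi> a) (\<phi> b)" using fv[OF abV(1,2) ab(3)] by (simp add: Pp_def)
        then have "1 \<le> flow_val V E (G T) (\<phi> a) (\<phi> b)" using Ppos unfolding fvG by simp
        then show "K_weight i j \<le> flow_val V E (G T) ((\<phi> \<circ> \<beta>) i) ((\<phi> \<circ> \<beta>) j)"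
          by (simp add: K_weight_def a_def b_def)
      qed
      have "inter_G V E (K_vertices (card T)) K_weight \<le> ereal (inter V E (G T))"
        unfolding inter_G_def using HK by (intro Inf_lower) blast
      then have "ereal (pmf \<mu> S * pmf \<mu> S') * inter_G V E (K_vertices (card T)) K_weight
          \<le> ereal (pmf \<mu> S * pmf \<mu> S') * ereal (inter V E (G T))"
        by (rule ereal_mult_left_mono) simp
      then show ?thesis by (simp add: T_def)
    qed
    have "(\<Sum>S\<in>Pow V. \<Sum>S'\<in>Pow V.
               ereal (pmf \<mu> S * pmf \<mu> S') * inter_G V E (K_vertices (card (S \<inter> S'))) K_weight)
        \<le> (\<Sum>S\<in>Pow V. \<Sum>S'\<in>Pow V. ereal (pmf \<mu> S * pmf \<mu> S' * inter V E (G (S \<inter> S'))))"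
      by (intro sum_mono stepA) auto
    also have "\<dots> = ereal (\<Sum>S\<in>Pow V. \<Sum>S'\<in>Pow V. pmf \<mu> S * pmf \<mu> S' * inter V E (G (S \<inter> S')))"
      by (simp only: sum_ereal)
    also have "\<dots> \<le> ereal (inter V E F)"
      unfolding G_eq ereal_less_eq by (rule stepB[OF assms(2) finV F0])
    finally show "(\<Sum>S\<in>Pow V. \<Sum>S'\<in>Pow V.
               ereal (pmf \<mu> S * pmf \<mu> S') * inter_G V E (K_vertices (card (S \<inter> S'))) K_weight)
        \<le> ereal (inter V E F)" .
  qed
  show ?thesis unfolding e1 by (rule e2)
qed

end
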